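(* Let $L\geq 1$ be an integer, $P\geq 0$, and $p_B\in[0,1]$. Let $\beta_1,\ldots,\beta_L$ be i.i.d. random variables with $\mathbb{P}(\beta_l=0)=p_B$, $\mathbb{P}(\beta_l=1)=1-p_B$, and let $\theta_1,\ldots,\theta_L$ be i.i.d. $\mathrm{Uniform}(0,2\pi)$ random variables independent of $\boldsymbol{\beta}=(\beta_1,\ldots,\beta_L)$. Set $h_l=\beta_l e^{j\theta_l}$, $\mathbf{h}=[h_1,\ldots,h_L]^{\mathsf T}$, and $\alpha=\sum_{l=1}^L\beta_l$ (so $\alpha\sim\mathrm{Binomial}(L,1-p_B)$). Let $\mathcal{Q}$ be the set of functions $\mathbf{Q}$ mapping each $\mathbf{b}\in\{0,1\}^L$ to a complex Hermitian positive semidefinite $L\times L$ matrix $\mathbf{Q}(\mathbf{b})$ with $[\mathbf{Q}(\mathbf{b})]_{l,l}\leq P$ for all $l\in\{1,\ldots,L\}$. Then $$\sup_{\mathbf{Q}\in\mathcal{Q}}\mathbb{E}\big[\log(1+\mathbf{h}^{\mathsf H}\mathbf{Q}(\boldsymbol{\beta})\mathbf{h})\big]=\mathbb{E}[\log(1+\alpha P)].$$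
   Context: This quantity is the ergodic capacity of a multi-point intermittent block fading channel $y=\sum_{l}h_l x_l+z$ with unit-variance complex Gaussian noise, perfect channel knowledge at the receiver, knowledge of the blockage state $\boldsymbol{\beta}$ at the transmitters, and per-transmitter power constraint $P$. Here $\beta_l$ has the stationary distribution of a binary Markov blockage chain, with $p_B$ the blockage probability. $\log$ is the logarithm in a fixed base (e.g. base 2); $\mathbf{h}^{\mathsf H}$ is the conjugate transpose. *)

theory Defs
  imports "HOL-Probability.Probability"
begin

text \<open>L x L complex matrices are represented as functions nat => nat => complex,
  only the entries with indices below L being relevant.\<close>

definition hermitian_mat :: "nat \<Rightarrow> (nat \<Rightarrow> nat \<Rightarrow> complex) \<Rightarrow> bool" where
  "hermitian_mat L A \<longleftrightarrow> (\<forall>i<L. \<forall>k<L. A k i = cnj (A i k))"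

definition quad_form :: "nat \<Rightarrow> (nat \<Rightarrow> nat \<Rightarrow> complex) \<Rightarrow> (nat \<Rightarrow> complex) \<Rightarrow> complex" where
  "quad_form L A v = (\<Sum>i<L. \<Sum>k<L. cnj (v i) * A i k * v k)"

definition psd_mat :: "nat \<Rightarrow> (nat \<Rightarrow> nat \<Rightarrow> complex) \<Rightarrow> bool" where
  "psd_mat L A \<longleftrightarrow> hermitian_mat L A \<and> (\<forall>v. Re (quad_form L A v) \<ge> 0)"

text \<open>The admissible policies: maps from blockage states b in {0,1}^L (encoded as
  extensional bool vectors) to Hermitian PSD matrices with diagonal entries at most P.\<close>
definition admissible_Q :: "nat \<Rightarrow> real \<Rightarrow> ((nat \<Rightarrow> bool) \<Rightarrow> nat \<Rightarrow> nat \<Rightarrow> complex) set" where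
  "admissible_Q L P = {Q. \<forall>b \<in> PiE {..<L} (\<lambda>_. UNIV).
      psd_mat L (Q b) \<and> (\<forall>l<L. Re (Q b l l) \<le> P)}"

definition channel_space :: "nat \<Rightarrow> real \<Rightarrow> ((nat \<Rightarrow> bool) \<times> (nat \<Rightarrow> real)) measure" where
  "channel_space L pB =
     (PiM {..<L} (\<lambda>_. measure_pmf (bernoulli_pmf (1 - pB))))
       \<Otimes>\<^sub>M (PiM {..<L} (\<lambda>_. uniform_measure lborel {0..2*pi}))"

definition chan_h :: "(nat \<Rightarrow> bool) \<Rightarrow> (nat \<Rightarrow> real) \<Rightarrow> nat \<Rightarrow> complex" where
  "chan_h b \<theta> l = of_bool (b l) * cis (\<theta> l)"

end

theory Submission
  imports Defs
begin


abbreviation "U \<equiv> uniform_measure lborel {0..2*pi}"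

lemma U_prob: "prob_space U"
  by (rule prob_space_uniform_measure) auto

lemma U_dens: "U = density lborel (\<lambda>x. ennreal (indicator {0..2*pi} x / (2*pi)))"
  unfolding uniform_measure_def
proof (intro density_cong)
  have "1 / ennreal (2 * pi) = ennreal (1 / (2 * pi))"
    using divide_ennreal[of 1 "2*pi"] by simp
  then show "AE x in lborel. indicator {0..2 * pi} x / emeasure lborel {0..2 * pi} = ennreal (indicator {0..2 * pi} x / (2 * pi))"
    by (auto split: split_indicator)
qed auto

lemma U_integral:
  assumes F: "\<And>x. (F has_real_derivative f x) (at x)" and c: "continuous_on UNIV f"
  shows "integral\<^sup>L U f = (F (2*pi) - F 0) / (2*pi)"
proof -
  have fm: "f \<in> borel_measurable borel" using c by (simp add: borel_measurable_continuous_onI)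
  have "integral\<^sup>L U f = (\<integral>x. (indicator {0..2*pi} x / (2*pi)) *\<^sub>R f x \<partial>lborel)"
    unfolding U_dens by (rule integral_density) (auto simp: fm)
  also have "\<dots> = (\<integral>x. indicator {0..2*pi} x *\<^sub>R f x \<partial>lborel) / (2*pi)"
    by (simp add: mult.commute)
  also have "(\<integral>x. indicator {0..2*pi} x *\<^sub>R f x \<partial>lborel) = F (2*pi) - F 0"
    by (rule integral_FTC_atLeastAtMost) (auto intro: has_field_derivative_at_within[OF F] continuous_on_subset[OF c] simp: has_real_derivative_iff_has_vector_derivative[symmetric])
  finally show ?thesis .
qed

lemma U_cos: "integral\<^sup>L U cos = 0"
proof -
  have "integral\<^sup>L U cos = (sin (2*pi) - sin 0) / (2*pi)"
    by (rule U_integral) (auto intro!: derivative_eq_intros continuous_intros)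
  then show ?thesis by simp
qed
lemma U_sin: "integral\<^sup>L U sin = 0"
proof -
  have "integral\<^sup>L U sin = ((\<lambda>x. - cos x) (2*pi) - (\<lambda>x. - cos x) 0) / (2*pi)"
    by (rule U_integral) (auto intro!: derivative_eq_intros continuous_intros)
  then show ?thesis by simp
qed




abbreviation BB :: "real \<Rightarrow> nat \<Rightarrow> _" where "BB p L \<equiv> PiM {..<L} (\<lambda>_. measure_pmf (bernoulli_pmf p))"
abbreviation TT :: "nat \<Rightarrow> _" where "TT L \<equiv> PiM {..<L} (\<lambda>_. U)"

lemma BB_space: "space (BB p L) = PiE {..<L} (\<lambda>_. UNIV)"
  by (simp add: space_PiM)

lemma BB_sets: assumes "S \<subseteq> space (BB p L)" shows "S \<in> sets (BB p L)"
proof -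
  have "finite (PiE {..<L} (\<lambda>_. UNIV::bool set))" by (rule finite_PiE) auto
  then have fin: "finite S" using assms finite_subset by (auto simp: BB_space)
  have S: "S = (\<Union>b\<in>S. PiE {..<L} (\<lambda>i. {b i}))"
  proof -
    have "PiE {..<L} (\<lambda>i. {b i}) = {b}" if "b \<in> S" for b
    proof
      show "{b} \<subseteq> PiE {..<L} (\<lambda>i. {b i})" using assms that by (auto simp: BB_space)
      show "PiE {..<L} (\<lambda>i. {b i}) \<subseteq> {b}"
      proof
        fix x assume x: "x \<in> PiE {..<L} (\<lambda>i. {b i})"
        have "x j = b j" for j
          using x assms that by (cases "j < L") (auto simp: BB_space PiE_def extensional_def)
        then show "x \<in> {b}" by auto
      qed
    qed
    then show ?thesis by auto
  qed
  show ?thesis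
    by (subst S, intro sets.finite_UN fin ballI sets_PiM_I_finite) auto
qed

lemma meas_beta: "(F :: (nat \<Rightarrow> bool) \<Rightarrow> 'b::topological_space) \<in> borel_measurable (BB p L)"
  by (rule measurableI) (auto intro!: BB_sets)

lemma BB_prob: "prob_space (BB p L)"
  by (intro prob_space_PiM prob_space_measure_pmf)

lemma TT_prob: "prob_space (TT L)"
  by (intro prob_space_PiM U_prob)

lemma CS_pair: "pair_prob_space (BB p L) (TT L)"
proof -
  interpret b: prob_space "BB p L" by (rule BB_prob)
  interpret t: prob_space "TT L" by (rule TT_prob)
  show ?thesis by unfold_locales
qed

lemma CS_prob: "prob_space (channel_space L p)"
proof -
  interpret pair_prob_space "BB (1-p) L" "TT L" by (rule CS_pair)
  show ?thesis unfolding channel_space_def by (rule P.prob_space_axioms)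
qed

lemma CS_space: "space (channel_space L p) = PiE {..<L} (\<lambda>_. UNIV) \<times> PiE {..<L} (\<lambda>_. UNIV)"
  unfolding channel_space_def by (simp add: space_pair_measure space_PiM)

lemma fst_bound: fixes L :: nat and G :: "(nat \<Rightarrow> bool) \<Rightarrow> real" assumes "b \<in> PiE {..<L} (\<lambda>_. UNIV)"
  shows "\<bar>G b :: real\<bar> \<le> (\<Sum>b'\<in>PiE {..<L} (\<lambda>_. UNIV). \<bar>G b'\<bar>)"
proof (rule member_le_sum[OF assms])
  show "finite (PiE {..<L} (\<lambda>_. UNIV::bool set))" by (rule finite_PiE) auto
qed auto

lemma int_beta: "integrable (channel_space L p) (\<lambda>\<omega>. G (fst \<omega>) :: real)"
proof -
  interpret prob_space "channel_space L p" by (rule CS_prob)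
  show ?thesis
  proof (rule integrable_const_bound[where B="\<Sum>b'\<in>PiE {..<L} (\<lambda>_. UNIV). \<bar>G b'\<bar>"])
    show "AE x in channel_space L p. norm (G (fst x)) \<le> (\<Sum>b'\<in>PiE {..<L} (\<lambda>_. UNIV). \<bar>G b'\<bar>)"
    proof (intro AE_I2)
      fix x assume "x \<in> space (channel_space L p)"
      then have "fst x \<in> PiE {..<L} (\<lambda>_. UNIV)" unfolding CS_space by (cases x) simp
      from fst_bound[OF this, of G] show "norm (G (fst x)) \<le> (\<Sum>b'\<in>PiE {..<L} (\<lambda>_. UNIV). \<bar>G b'\<bar>)"
        by simp
    qed
    show "(\<lambda>\<omega>. G (fst \<omega>)) \<in> borel_measurable (channel_space L p)"
      unfolding channel_space_def by (intro measurable_compose[OF measurable_fst meas_beta])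
  qed
qed

lemma sU: "sets U = sets borel" by simp
lemma sin_U: "sin \<in> borel_measurable U" and cos_U: "cos \<in> borel_measurable U"
  unfolding measurable_cong_sets[OF sU refl] by measurable

lemma Z:
  fixes A :: "(nat \<Rightarrow> bool) \<Rightarrow> real"
  assumes ik: "i \<noteq> k" "i < L" "k < L" and u: "u = sin \<or> u = cos" and v: "v = sin \<or> v = cos"
  shows "integrable (channel_space L p) (\<lambda>\<omega>. A (fst \<omega>) * (u (snd \<omega> k) * v (snd \<omega> i)))"
    and "(\<integral>\<omega>. A (fst \<omega>) * (u (snd \<omega> k) * v (snd \<omega> i)) \<partial>channel_space L p) = 0"
proof -
  interpret pair_prob_space "BB (1-p) L" "TT L" by (rule CS_pair)
  interpret u: prob_space U by (rule U_prob)
  interpret T: product_prob_space "\<lambda>_. U" "{..<L}"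
    by (intro product_prob_space.intro product_sigma_finite.intro product_prob_space_axioms.intro)
      (auto intro: u.sigma_finite_measure_axioms U_prob)
  have um: "u \<in> borel_measurable U" "v \<in> borel_measurable U"
    using u v sin_U cos_U by blast+
  have ub: "\<bar>u x\<bar> \<le> 1" "\<bar>v x\<bar> \<le> 1" for x using u v by auto
  have uint: "integrable U u" "integrable U v"
    by (rule u.integrable_const_bound[where B=1], rule AE_I2, simp add: ub, rule um)+
  have u0: "integral\<^sup>L U u = 0" using u U_sin U_cos by auto
  define f where "f j = (if j = k then u else if j = i then v else (\<lambda>_. 1::real))" for j
  have prodf: "(\<Prod>j\<in>{..<L}. f j (x j)) = u (x k) * v (x i)" for x
  proof -
    have "(\<Prod>j\<in>{..<L}. f j (x j)) = f k (x k) * (\<Prod>j\<in>{..<L}-{k}. f j (x j))"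
      using ik by (intro prod.remove) auto
    also have "(\<Prod>j\<in>{..<L}-{k}. f j (x j)) = f i (x i) * (\<Prod>j\<in>{..<L}-{k}-{i}. f j (x j))"
      using ik by (intro prod.remove) auto
    also have "(\<Prod>j\<in>{..<L}-{k}-{i}. f j (x j)) = 1"
      by (intro prod.neutral) (simp add: f_def)
    finally show ?thesis using ik by (simp add: f_def)
  qed
  have fint: "integrable U (f j)" for j using uint by (simp add: f_def)
  have Tint: "integrable (TT L) (\<lambda>x. u (x k) * v (x i))"
    using T.product_integrable_prod[of "{..<L}" f] fint by (simp add: prodf)
  have T0: "(\<integral>x. u (x k) * v (x i) \<partial>TT L) = 0"
  proof -
    have "(\<integral>x. u (x k) * v (x i) \<partial>TT L) = (\<Prod>j\<in>{..<L}. integral\<^sup>L U (f j))"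
      using T.product_integral_prod[of "{..<L}" f] fint by (simp add: prodf)
    also have "\<dots> = 0"
    proof (rule prod_zero)
      show "\<exists>j\<in>{..<L}. integral\<^sup>L U (f j) = 0" using ik u0 by (intro bexI[of _ k]) (simp_all add: f_def)
    qed simp
    finally show ?thesis .
  qed
  have Tm: "(\<lambda>x. u (x k) * v (x i)) \<in> borel_measurable (TT L)"
    using Tint by (rule borel_measurable_integrable)
  let ?B = "\<Sum>b'\<in>PiE {..<L} (\<lambda>_. UNIV). \<bar>A b'\<bar>"
  have I: "integrable (BB (1-p) L \<Otimes>\<^sub>M TT L) (\<lambda>\<omega>. A (fst \<omega>) * (u (snd \<omega> k) * v (snd \<omega> i)))"
  proof (rule P.integrable_const_bound[where B="?B"])
    show "AE x in BB (1-p) L \<Otimes>\<^sub>M TT L. norm (A (fst x) * (u (snd x k) * v (snd x i))) \<le> ?B"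
    proof (intro AE_I2)
      fix x assume "x \<in> space (BB (1-p) L \<Otimes>\<^sub>M TT L)"
      then have "fst x \<in> PiE {..<L} (\<lambda>_. UNIV)" unfolding space_pair_measure space_PiM
        by (cases x) simp
      then have a: "\<bar>A (fst x)\<bar> \<le> ?B" by (rule fst_bound)
      have "\<bar>u (snd x k) * v (snd x i)\<bar> \<le> 1" using ub by (simp add: abs_mult mult_le_one)
      then have "\<bar>A (fst x)\<bar> * \<bar>u (snd x k) * v (snd x i)\<bar> \<le> ?B * 1"
        using a by (intro mult_mono) auto
      then show "norm (A (fst x) * (u (snd x k) * v (snd x i))) \<le> ?B" by (simp add: abs_mult)
    qed
    show "(\<lambda>x. A (fst x) * (u (snd x k) * v (snd x i))) \<in> borel_measurable (BB (1-p) L \<Otimes>\<^sub>M TT L)"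
      by (intro borel_measurable_times measurable_compose[OF measurable_fst meas_beta]
            measurable_compose[OF measurable_snd Tm])
  qed
  then show "integrable (channel_space L p) (\<lambda>\<omega>. A (fst \<omega>) * (u (snd \<omega> k) * v (snd \<omega> i)))"
    unfolding channel_space_def .
  have "(\<integral>\<omega>. A (fst \<omega>) * (u (snd \<omega> k) * v (snd \<omega> i)) \<partial>channel_space L p)
      = (\<integral>b. (\<integral>t. A b * (u (t k) * v (t i)) \<partial>TT L) \<partial>BB (1-p) L)"
    using integral_fst'[OF I] unfolding channel_space_def by simp
  also have "\<dots> = 0" using T0 by simp
  finally show "(\<integral>\<omega>. A (fst \<omega>) * (u (snd \<omega> k) * v (snd \<omega> i)) \<partial>channel_space L p) = 0" .
qed




lemma tangent:
  fixes a q t c :: real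
  assumes c: "c > 1" and a: "a \<ge> 0" and q: "q \<ge> 0" and h: "q - a \<le> (1 + a) * ln c * t"
  shows "log c (1 + q) \<le> log c (1 + a) + t"
proof -
  have lc: "ln c > 0" using c by simp
  have "ln (1 + q) - ln (1 + a) = ln ((1 + q) / (1 + a))"
    using a q by (simp add: ln_div)
  also have "\<dots> \<le> (1 + q) / (1 + a) - 1"
    using a q by (intro ln_le_minus_one) auto
  also have "\<dots> = (q - a) / (1 + a)" using a by (simp add: field_simps)
  also have "\<dots> \<le> ln c * t" using h a by (simp add: divide_le_eq mult.commute mult.left_commute)
  finally have "ln (1 + q) \<le> ln (1 + a) + ln c * t" by simp
  then have "ln (1 + q) / ln c \<le> (ln (1 + a) + ln c * t) / ln c"
    using lc by (intro divide_right_mono) auto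
  then show ?thesis using lc by (simp add: log_def add_divide_distrib)
qed

lemma expand:
  "Re (cnj (of_bool x * cis a) * q * (of_bool y * cis b)) =
    of_bool x * of_bool y * (Re q * (cos b * cos a + sin b * sin a) - Im q * (sin b * cos a - cos b * sin a))"
  by (cases x; cases y) (simp_all add: cis.sel algebra_simps)

lemma diag_term: "Re (cnj (of_bool x * cis a) * q * (of_bool x * cis a)) = of_bool x * Re q"
  by (cases x) (simp_all add: cis.sel algebra_simps flip: power2_eq_square)




definition Dn :: "nat \<Rightarrow> real \<Rightarrow> real \<Rightarrow> (nat \<Rightarrow> bool) \<Rightarrow> real" where
  "Dn L P c b = (1 + real (card {l. l < L \<and> b l}) * P) * ln c"

definition W where
  "W L P c Q i k \<omega> = (if i = k then 0 else
     Re (cnj (chan_h (fst \<omega>) (snd \<omega>) i) * Q (fst \<omega>) i k * chan_h (fst \<omega>) (snd \<omega>) k) / Dn L P c (fst \<omega>))"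

lemma W_int:
  assumes "i < L" "k < L"
  shows "integrable (channel_space L p) (W L P c Q i k) \<and> integral\<^sup>L (channel_space L p) (W L P c Q i k) = 0"
proof (cases "i = k")
  case True
  then have "W L P c Q i k = (\<lambda>_. 0)" by (intro ext) (simp add: W_def)
  then show ?thesis by simp
next
  case False
  define A1 where "A1 b = of_bool (b i) * of_bool (b k) * Re (Q b i k) / Dn L P c b" for b
  define A2 where "A2 b = of_bool (b i) * of_bool (b k) * Im (Q b i k) / Dn L P c b" for b
  have eq: "W L P c Q i k = (\<lambda>\<omega>. A1 (fst \<omega>) * (cos (snd \<omega> k) * cos (snd \<omega> i))
     + A1 (fst \<omega>) * (sin (snd \<omega> k) * sin (snd \<omega> i))
     - A2 (fst \<omega>) * (sin (snd \<omega> k) * cos (snd \<omega> i))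
     + A2 (fst \<omega>) * (cos (snd \<omega> k) * sin (snd \<omega> i)))"
  proof (rule ext)
    fix \<omega> :: "(nat \<Rightarrow> bool) \<times> (nat \<Rightarrow> real)"
    show "W L P c Q i k \<omega> = A1 (fst \<omega>) * (cos (snd \<omega> k) * cos (snd \<omega> i))
     + A1 (fst \<omega>) * (sin (snd \<omega> k) * sin (snd \<omega> i))
     - A2 (fst \<omega>) * (sin (snd \<omega> k) * cos (snd \<omega> i))
     + A2 (fst \<omega>) * (cos (snd \<omega> k) * sin (snd \<omega> i))"
      using False unfolding W_def chan_h_def expand A1_def A2_def
      by (simp add: add_divide_distrib diff_divide_distrib algebra_simps)
  qed
  note Z1 = Z(1)[OF False assms] and Z2 = Z(2)[OF False assms]
  let ?cc = "\<lambda>\<omega>. A1 (fst \<omega>) * (cos (snd \<omega> k) * cos (snd \<omega> i))"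
  let ?ss = "\<lambda>\<omega>. A1 (fst \<omega>) * (sin (snd \<omega> k) * sin (snd \<omega> i))"
  let ?sc = "\<lambda>\<omega>. A2 (fst \<omega>) * (sin (snd \<omega> k) * cos (snd \<omega> i))"
  let ?cs = "\<lambda>\<omega>. A2 (fst \<omega>) * (cos (snd \<omega> k) * sin (snd \<omega> i))"
  have i1: "integrable (channel_space L p) ?cc" by (rule Z1) simp_all
  have i2: "integrable (channel_space L p) ?ss" by (rule Z1) simp_all
  have i3: "integrable (channel_space L p) ?sc" by (rule Z1) simp_all
  have i4: "integrable (channel_space L p) ?cs" by (rule Z1) simp_all
  have z1: "integral\<^sup>L (channel_space L p) ?cc = 0" by (rule Z2) simp_all
  have z2: "integral\<^sup>L (channel_space L p) ?ss = 0" by (rule Z2) simp_all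
  have z3: "integral\<^sup>L (channel_space L p) ?sc = 0" by (rule Z2) simp_all
  have z4: "integral\<^sup>L (channel_space L p) ?cs = 0" by (rule Z2) simp_all
  have j1: "integrable (channel_space L p) (\<lambda>\<omega>. ?cc \<omega> + ?ss \<omega>)" using i1 i2 by (rule Bochner_Integration.integrable_add)
  have j2: "integrable (channel_space L p) (\<lambda>\<omega>. ?cc \<omega> + ?ss \<omega> - ?sc \<omega>)" using j1 i3 by (rule Bochner_Integration.integrable_diff)
  have j3: "integrable (channel_space L p) (\<lambda>\<omega>. ?cc \<omega> + ?ss \<omega> - ?sc \<omega> + ?cs \<omega>)" using j2 i4 by (rule Bochner_Integration.integrable_add)
  have "integral\<^sup>L (channel_space L p) (\<lambda>\<omega>. ?cc \<omega> + ?ss \<omega> - ?sc \<omega> + ?cs \<omega>)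
     = integral\<^sup>L (channel_space L p) (\<lambda>\<omega>. ?cc \<omega> + ?ss \<omega> - ?sc \<omega>) + integral\<^sup>L (channel_space L p) ?cs"
    using j2 i4 by (rule Bochner_Integration.integral_add)
  also have "integral\<^sup>L (channel_space L p) (\<lambda>\<omega>. ?cc \<omega> + ?ss \<omega> - ?sc \<omega>)
     = integral\<^sup>L (channel_space L p) (\<lambda>\<omega>. ?cc \<omega> + ?ss \<omega>) - integral\<^sup>L (channel_space L p) ?sc"
    using j1 i3 by (rule Bochner_Integration.integral_diff)
  also have "integral\<^sup>L (channel_space L p) (\<lambda>\<omega>. ?cc \<omega> + ?ss \<omega>)
     = integral\<^sup>L (channel_space L p) ?cc + integral\<^sup>L (channel_space L p) ?ss"
    using i1 i2 by (rule Bochner_Integration.integral_add)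
  finally show ?thesis unfolding eq using j3 z1 z2 z3 z4 by simp
qed




lemma card_sum: fixes L :: nat shows "real (card {l. l < L \<and> b l}) = (\<Sum>i<L. of_bool (b i))"
proof -
  have e: "{l. l < L \<and> b l} = {x \<in> {..<L}. b x}" by auto
  have "real (card {l. l < L \<and> b l}) = (\<Sum>x\<in>{x \<in> {..<L}. b x}. 1)" unfolding e by simp
  also have "\<dots> = (\<Sum>x\<in>{..<L}. if b x then 1 else 0)" by (rule sum.inter_filter) simp
  also have "\<dots> = (\<Sum>i<L. of_bool (b i))" by (intro sum.cong) auto
  finally show ?thesis .
qed

lemma pointwise:
  fixes c P :: real
  assumes c: "c > 1" and P: "P \<ge> 0" and b: "b \<in> PiE {..<L} (\<lambda>_. UNIV)" and Q: "Q \<in> admissible_Q L P"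
  shows "log c (1 + Re (quad_form L (Q b) (chan_h b t)))
     \<le> log c (1 + real (card {l. l < L \<and> b l}) * P) + (\<Sum>i<L. \<Sum>k<L. W L P c Q i k (b, t))"
proof -
  define h where "h = chan_h b t"
  define a where "a = real (card {l. l < L \<and> b l}) * P"
  define f where "f i k = Re (cnj (h i) * Q b i k * h k)" for i k
  have psd: "psd_mat L (Q b)" and diag: "\<And>l. l < L \<Longrightarrow> Re (Q b l l) \<le> P"
    using Q b unfolding admissible_Q_def by auto
  have q0: "Re (quad_form L (Q b) h) \<ge> 0" using psd unfolding psd_mat_def by auto
  have a0: "a \<ge> 0" using P by (simp add: a_def)
  have lc: "ln c > 0" using c by simp
  have Dn: "Dn L P c b = (1 + a) * ln c" by (simp add: Dn_def a_def)
  have q: "Re (quad_form L (Q b) h) = (\<Sum>i<L. \<Sum>k<L. f i k)"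
    by (simp add: quad_form_def f_def Re_sum)
  have split: "(\<Sum>k<L. f i k) = f i i + (\<Sum>k<L. if i = k then 0 else f i k)" if "i < L" for i
  proof -
    have "(\<Sum>k<L. f i k) = (\<Sum>k<L. (if i = k then f i k else 0) + (if i = k then 0 else f i k))"
      by (intro sum.cong) auto
    also have "\<dots> = (\<Sum>k<L. (if i = k then f i k else 0)) + (\<Sum>k<L. if i = k then 0 else f i k)"
      by (rule sum.distrib)
    also have "(\<Sum>k<L. (if i = k then f i k else 0)) = f i i" using that by simp
    finally show ?thesis .
  qed
  have fd: "f i i = of_bool (b i) * Re (Q b i i)" for i
    unfolding f_def h_def chan_h_def by (rule diag_term)
  have dle: "(\<Sum>i<L. f i i) \<le> a"
  proof -
    have "(\<Sum>i<L. f i i) \<le> (\<Sum>i<L. of_bool (b i) * P)"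
      by (intro sum_mono) (auto simp: fd diag)
    also have "\<dots> = a" by (simp add: a_def card_sum sum_distrib_right)
    finally show ?thesis .
  qed
  define Off where "Off = (\<Sum>i<L. \<Sum>k<L. if i = k then 0 else f i k)"
  have qO: "Re (quad_form L (Q b) h) = (\<Sum>i<L. f i i) + Off"
    unfolding q Off_def by (simp add: split sum.distrib)
  have WO: "(\<Sum>i<L. \<Sum>k<L. W L P c Q i k (b, t)) = Off / ((1 + a) * ln c)"
  proof -
    have "(\<Sum>i<L. \<Sum>k<L. W L P c Q i k (b, t)) = (\<Sum>i<L. \<Sum>k<L. (if i = k then 0 else f i k) / ((1 + a) * ln c))"
      by (intro sum.cong refl) (simp add: W_def Dn f_def h_def)
    then show ?thesis unfolding Off_def by (simp add: sum_divide_distrib)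
  qed
  have "log c (1 + Re (quad_form L (Q b) h)) \<le> log c (1 + a) + Off / ((1 + a) * ln c)"
  proof (rule tangent[OF c a0 q0])
    have "(1 + a) * ln c * (Off / ((1 + a) * ln c)) = Off" using a0 lc by simp
    then show "Re (quad_form L (Q b) h) - a \<le> (1 + a) * ln c * (Off / ((1 + a) * ln c))"
      using qO dle by simp
  qed
  then show ?thesis using WO by (simp add: h_def a_def)
qed




definition Q0 :: "real \<Rightarrow> (nat \<Rightarrow> bool) \<Rightarrow> nat \<Rightarrow> nat \<Rightarrow> complex" where
  "Q0 P b i k = (if i = k then complex_of_real P else 0)"

lemma quad_Q0: "quad_form L (Q0 P b) v = (\<Sum>i<L. cnj (v i) * complex_of_real P * v i)"
proof -
  have "quad_form L (Q0 P b) v = (\<Sum>i<L. \<Sum>k<L. if i = k then cnj (v i) * complex_of_real P * v k else 0)"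
    unfolding quad_form_def Q0_def by (intro sum.cong refl) auto
  also have "\<dots> = (\<Sum>i<L. cnj (v i) * complex_of_real P * v i)"
    by (intro sum.cong refl) simp
  finally show ?thesis .
qed

lemma Q0_adm: assumes "P \<ge> 0" shows "Q0 P \<in> admissible_Q L P"
proof -
  have "Re (quad_form L (Q0 P b) v) \<ge> 0" for b v
  proof -
    have "Re (quad_form L (Q0 P b) v) = (\<Sum>i<L. P * ((Re (v i))^2 + (Im (v i))^2))"
      unfolding quad_Q0 Re_sum
      by (intro sum.cong refl) (simp add: algebra_simps power2_eq_square)
    also have "\<dots> \<ge> 0" using assms by (intro sum_nonneg) auto
    finally show ?thesis .
  qed
  moreover have "hermitian_mat L (Q0 P b)" for b by (auto simp: hermitian_mat_def Q0_def)
  ultimately show ?thesis by (auto simp: admissible_Q_def psd_mat_def Q0_def)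
qed

lemma Q0_val: "Re (quad_form L (Q0 P b) (chan_h b t)) = real (card {l. l < L \<and> b l}) * P"
proof -
  have "Re (quad_form L (Q0 P b) (chan_h b t)) = (\<Sum>i<L. of_bool (b i) * P)"
    unfolding quad_Q0 Re_sum
  proof (intro sum.cong refl)
    fix i
    show "Re (cnj (chan_h b t i) * complex_of_real P * chan_h b t i) = of_bool (b i) * P"
      using diag_term[of "b i" "t i" "complex_of_real P"] by (simp add: chan_h_def)
  qed
  also have "\<dots> = real (card {l. l < L \<and> b l}) * P" by (simp add: card_sum sum_distrib_right)
  finally show ?thesis .
qed

theorem proposition1:
  fixes L :: nat and P pB c :: real
  assumes "L \<ge> 1" and "P \<ge> 0" and "0 \<le> pB" and "pB \<le> 1" and "c > 1"
  shows "(SUP Q \<in> admissible_Q L P.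
            \<integral>\<omega>. log c (1 + Re (quad_form L (Q (fst \<omega>)) (chan_h (fst \<omega>) (snd \<omega>))))
              \<partial>channel_space L pB)
         = (\<integral>\<omega>. log c (1 + real (card {l. l < L \<and> fst \<omega> l}) * P) \<partial>channel_space L pB)"
proof -
  let ?M = "channel_space L pB"
  let ?g = "\<lambda>\<omega>. log c (1 + real (card {l. l < L \<and> fst \<omega> l}) * P)"
  let ?F = "\<lambda>Q. \<integral>\<omega>. log c (1 + Re (quad_form L (Q (fst \<omega>)) (chan_h (fst \<omega>) (snd \<omega>)))) \<partial>?M"
  interpret prob_space ?M by (rule CS_prob)
  have c: "c > 1" and P: "P \<ge> 0" using assms by auto
  have gint: "integrable ?M ?g"
    using int_beta[of L pB "\<lambda>b. log c (1 + real (card {l. l < L \<and> b l}) * P)"] by simp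
  have g0: "0 \<le> integral\<^sup>L ?M ?g"
  proof (rule Bochner_Integration.integral_nonneg)
    fix x
    have "0 \<le> real (card {l. l < L \<and> fst x l}) * P" using P by simp
    then show "0 \<le> log c (1 + real (card {l. l < L \<and> fst x l}) * P)" using c by simp
  qed
  have bound: "?F Q \<le> integral\<^sup>L ?M ?g" if Q: "Q \<in> admissible_Q L P" for Q
  proof (cases "integrable ?M (\<lambda>\<omega>. log c (1 + Re (quad_form L (Q (fst \<omega>)) (chan_h (fst \<omega>) (snd \<omega>)))))")
    case False
    then show ?thesis using g0 by (simp add: not_integrable_integral_eq)
  next
    case True
    let ?R = "\<lambda>\<omega>. ?g \<omega> + (\<Sum>i<L. \<Sum>k<L. W L P c Q i k \<omega>)"
    have Wi: "integrable ?M (\<lambda>\<omega>. \<Sum>i<L. \<Sum>k<L. W L P c Q i k \<omega>)"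
      using W_int by (intro Bochner_Integration.integrable_sum) auto
    have Rint: "integrable ?M ?R" using gint Wi by (rule Bochner_Integration.integrable_add)
    have "?F Q \<le> integral\<^sup>L ?M ?R"
    proof (rule integral_mono[OF True Rint])
      fix \<omega> assume "\<omega> \<in> space ?M"
      then have "fst \<omega> \<in> PiE {..<L} (\<lambda>_. UNIV)" unfolding CS_space by (cases \<omega>) simp
      from pointwise[OF c P this Q, of "snd \<omega>"]
      show "log c (1 + Re (quad_form L (Q (fst \<omega>)) (chan_h (fst \<omega>) (snd \<omega>)))) \<le> ?R \<omega>" by simp
    qed
    also have "integral\<^sup>L ?M ?R = integral\<^sup>L ?M ?g + (\<integral>\<omega>. (\<Sum>i<L. \<Sum>k<L. W L P c Q i k \<omega>) \<partial>?M)"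
      using gint Wi by (rule Bochner_Integration.integral_add)
    also have "(\<integral>\<omega>. (\<Sum>i<L. \<Sum>k<L. W L P c Q i k \<omega>) \<partial>?M) = (\<Sum>i<L. \<integral>\<omega>. (\<Sum>k<L. W L P c Q i k \<omega>) \<partial>?M)"
      using W_int by (intro Bochner_Integration.integral_sum Bochner_Integration.integrable_sum) auto
    also have "\<dots> = (\<Sum>i<L. \<Sum>k<L. \<integral>\<omega>. W L P c Q i k \<omega> \<partial>?M)"
      using W_int by (intro sum.cong refl Bochner_Integration.integral_sum) auto
    also have "\<dots> = 0" using W_int by (intro sum.neutral ballI) auto
    finally show ?thesis by simp
  qed
  have F0: "?F (Q0 P) = integral\<^sup>L ?M ?g"
    by (simp add: Q0_val)
  have "Sup (?F ` admissible_Q L P) = integral\<^sup>L ?M ?g"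
  proof (rule cSup_eq_maximum)
    show "integral\<^sup>L ?M ?g \<in> ?F ` admissible_Q L P"
      using Q0_adm[OF P] F0 by (intro image_eqI[of _ _ "Q0 P"]) auto
    show "x \<le> integral\<^sup>L ?M ?g" if "x \<in> ?F ` admissible_Q L P" for x
      using that bound by auto
  qed
  then show ?thesis by simp
qed


end
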